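(* Let $n\geq5$ and let $M$ be a Lagrangian submanifold of a complex space form $\tilde M^n(4c)$ such that at a point $p\in M$ equality holds in $\delta(2,n-2)\leq\frac{n^2(n-2)}{4(n-1)}H^2+2(n-2)c$. Then there exist an orthonormal basis $\{e_1,\ldots,e_n\}$ of $T_pM$ and real numbers $\gamma,\lambda,\mu$ and $h^k_{ij}$ ($i,j,k\ge3$) such that $$h(e_1,e_1)=\gamma Je_1,\quad h(e_1,e_2)=(n\lambda-\gamma)Je_2,\quad h(e_2,e_2)=(n\lambda-\gamma)Je_1+n\mu Je_2,$$ $$h(e_1,e_i)=\lambda Je_i,\quad h(e_2,e_i)=\mu Je_i,\quad h(e_i,e_j)=\delta_{ij}(\lambda Je_1+\mu Je_2)+\sum_{k=3}^nh^k_{ij}Je_k$$ for $i,j\ge3$, where the $h^k_{ij}$ are symmetric in the three indices and $h^k_{33}+\cdots+h^k_{nn}=0$ for every $k\ge3$. Moreover $\gamma\ge0$ and $\gamma\ge\frac{2n}{3}\lambda$; if $\gamma=0$ then $\lambda=\mu=0$; and if $\gamma>0$ then $\gamma>\frac n2\lambda$.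
   Context: A complex space form $\tilde M^n(4c)$ is a Kähler manifold of complex dimension $n$ with complex structure $J$ and constant holomorphic sectional curvature $4c$. A real $n$-dimensional submanifold $M$ is Lagrangian if $J$ maps each $T_pM$ onto the normal space. $h$ is the second fundamental form, $H=\frac1n\operatorname{trace}h$, $H^2=\langle H,H\rangle$. For $L\subseteq T_pM$ of dimension $r\ge2$ with orthonormal basis $e_1,\ldots,e_r$, $\tau(L)=\sum_{\alpha<\beta}K(e_\alpha\wedge e_\beta)$ ($K$ the sectional curvature of $M$), $\tau(p)=\tau(T_pM)$, and $\delta(2,n-2)(p)=\tau(p)-\inf\{\tau(L_1)+\tau(L_2)\}$ over mutually orthogonal subspaces $L_1,L_2\subseteq T_pM$ with $\dim L_1=2$, $\dim L_2=n-2$. *)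

theory Defs
  imports "HOL-Analysis.Analysis"
begin

text \<open>Pointwise model of a Lagrangian submanifold M^n of a complex space form of
holomorphic sectional curvature 4c at a point p.  T_pM is modelled by real^'n
(n = CARD('n)), and the normal space J(T_pM) is identified with T_pM via J:
the second fundamental form is written h(X,Y) = J (sff X Y).  The Lagrangian
condition says that the cubic form <h(X,Y),JZ> = <sff X Y, Z> is totally symmetric.\<close>

definition lagrangian_sff :: "(real^'n \<Rightarrow> real^'n \<Rightarrow> real^'n) \<Rightarrow> bool" where
  "lagrangian_sff sff \<longleftrightarrow> bilinear sff \<and> (\<forall>x y. sff x y = sff y x)
     \<and> (\<forall>x y z. inner (sff x y) z = inner (sff x z) y)"

text \<open>Sectional curvature of the plane spanned by orthonormal u, v, via the Gauss
equation (ambient curvature c on totally real planes; J is an isometry).\<close>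
definition sec_curv :: "real \<Rightarrow> (real^'n \<Rightarrow> real^'n \<Rightarrow> real^'n) \<Rightarrow> real^'n \<Rightarrow> real^'n \<Rightarrow> real" where
  "sec_curv c sff u v = c + inner (sff u u) (sff v v) - (norm (sff u v))^2"

definition orthonormal_basis_of :: "(real^'n) set \<Rightarrow> (nat \<Rightarrow> real^'n) \<Rightarrow> nat \<Rightarrow> bool" where
  "orthonormal_basis_of L e r \<longleftrightarrow> (\<forall>i<r. e i \<in> L)
     \<and> (\<forall>i<r. \<forall>j<r. inner (e i) (e j) = (if i = j then 1 else 0))
     \<and> span (e ` {..<r}) = L"

definition tau_basis :: "real \<Rightarrow> (real^'n \<Rightarrow> real^'n \<Rightarrow> real^'n) \<Rightarrow> (nat \<Rightarrow> real^'n) \<Rightarrow> nat \<Rightarrow> real" where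
  "tau_basis c sff e r = (\<Sum>b<r. \<Sum>a<b. sec_curv c sff (e a) (e b))"

text \<open>tau(L): computed with an orthonormal basis of L (the value is basis independent).\<close>
definition tau_sub :: "real \<Rightarrow> (real^'n \<Rightarrow> real^'n \<Rightarrow> real^'n) \<Rightarrow> (real^'n) set \<Rightarrow> real" where
  "tau_sub c sff L = (SOME t. \<exists>e. orthonormal_basis_of L e (dim L) \<and> t = tau_basis c sff e (dim L))"

definition delta_2_nm2 :: "real \<Rightarrow> (real^'n \<Rightarrow> real^'n \<Rightarrow> real^'n) \<Rightarrow> real" where
  "delta_2_nm2 c sff = tau_sub c sff (UNIV :: (real^'n) set)
     - Inf {tau_sub c sff L1 + tau_sub c sff L2 | L1 L2.
              subspace L1 \<and> subspace L2 \<and> dim L1 = 2 \<and> dim L2 = CARD('n) - 2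
              \<and> (\<forall>x\<in>L1. \<forall>y\<in>L2. inner x y = 0)}"

text \<open>Mean curvature vector (pulled back by J^{-1}); |H|^2 is unaffected.\<close>
definition mean_curv :: "(real^'n \<Rightarrow> real^'n \<Rightarrow> real^'n) \<Rightarrow> real^'n" where
  "mean_curv sff = (1 / real CARD('n)) *\<^sub>R (\<Sum>i\<in>UNIV. sff (axis i 1) (axis i 1))"

end

theory Submission
  imports Defs
begin


definition onf :: "(nat \<Rightarrow> real^'n) \<Rightarrow> nat \<Rightarrow> bool" where
  "onf g r \<longleftrightarrow> (\<forall>i<r. \<forall>j<r. inner (g i) (g j) = (if i = j then 1 else 0))"

lemma onf_inj: "onf g r \<Longrightarrow> inj_on g {..<r}"
  unfolding onf_def inj_on_def by (metis lessThan_iff zero_neq_one)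

lemma onf_indep: assumes "onf g r" shows "independent (g ` {..<r})"
proof (rule pairwise_orthogonal_independent)
  show "pairwise orthogonal (g ` {..<r})"
    using assms unfolding onf_def pairwise_def orthogonal_def by auto
  show "0 \<notin> g ` {..<r}"
    using assms unfolding onf_def by force
qed

lemma onf_card: "onf g r \<Longrightarrow> card (g ` {..<r}) = r"
  by (simp add: card_image onf_inj)

lemma onf_dim: "onf g r \<Longrightarrow> dim (span (g ` {..<r})) = r"
  by (metis dim_span_eq_card_independent onf_indep onf_card)

lemma expand_span:
  assumes o: "onf g r" and x: "x \<in> span (g ` {..<r})"
  shows "x = (\<Sum>a<r. inner x (g a) *\<^sub>R g a)"
proof -
  define y where "y = x - (\<Sum>a<r. inner x (g a) *\<^sub>R g a)"
  have ys: "y \<in> span (g ` {..<r})"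
    unfolding y_def by (intro span_diff x span_sum span_scale span_base) auto
  have "inner y (g b) = 0" if "b < r" for b
  proof -
    have "inner (\<Sum>a<r. inner x (g a) *\<^sub>R g a) (g b) = (\<Sum>a<r. inner x (g a) * (if a = b then 1 else 0))"
      using o that by (simp add: inner_sum_left onf_def)
    also have "\<dots> = inner x (g b)" using that by (simp add: if_distrib cong: if_cong)
    finally show ?thesis by (simp add: y_def inner_diff_left)
  qed
  hence "orthogonal y y"
    by (intro orthogonal_to_span[OF ys]) (auto simp: orthogonal_def)
  thus ?thesis by (simp add: y_def orthogonal_def)
qed

lemma onf_full:
  assumes "onf (f :: nat \<Rightarrow> real^'n) CARD('n)"
  shows "span (f ` {..<CARD('n)}) = UNIV"
proof -
  have "UNIV \<subseteq> span (f ` {..<CARD('n)})"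
    by (rule card_ge_dim_independent) (auto simp: onf_indep[OF assms] onf_card[OF assms])
  thus ?thesis by auto
qed

lemma trace_inv:
  fixes \<beta> :: "real^'n \<Rightarrow> real^'n \<Rightarrow> 'c::real_vector"
  assumes b: "bilinear \<beta>" and o: "onf g r" and o': "onf g' r"
    and sp: "span (g ` {..<r}) = span (g' ` {..<r})"
  shows "(\<Sum>a<r. \<beta> (g a) (g a)) = (\<Sum>a<r. \<beta> (g' a) (g' a))"
proof -
  have ge: "g a = (\<Sum>b<r. inner (g a) (g' b) *\<^sub>R g' b)" if "a < r" for a
  proof -
    have "g a \<in> span (g' ` {..<r})" using sp that by (metis image_eqI lessThan_iff span_base)
    thus ?thesis using expand_span[OF o'] by blast
  qed
  have g'e: "g' b = (\<Sum>a<r. inner (g' b) (g a) *\<^sub>R g a)" if "b < r" for b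
  proof -
    have "g' b \<in> span (g ` {..<r})" using sp that by (metis image_eqI lessThan_iff span_base)
    thus ?thesis using expand_span[OF o] by blast
  qed
  have orth: "(\<Sum>a<r. inner (g a) (g' b) * inner (g a) (g' b')) = (if b = b' then 1 else 0)"
    if "b < r" "b' < r" for b b'
  proof -
    have "inner (g' b) (g' b') = (\<Sum>a<r. inner (g a) (g' b) * inner (g a) (g' b'))"
      by (subst g'e[OF that(1)], subst inner_sum_left) (simp add: inner_commute)
    moreover have "inner (g' b) (g' b') = (if b = b' then 1 else 0)" using o' that by (simp add: onf_def)
    ultimately show ?thesis by simp
  qed
  have "(\<Sum>a<r. \<beta> (g a) (g a)) = (\<Sum>a<r. \<Sum>b<r. \<Sum>b'<r. (inner (g a) (g' b') * inner (g a) (g' b)) *\<^sub>R \<beta> (g' b) (g' b'))"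
  proof (rule sum.cong[OF refl])
    fix a assume "a \<in> {..<r}"
    hence "\<beta> (g a) (g a) = \<beta> (\<Sum>b<r. inner (g a) (g' b) *\<^sub>R g' b) (\<Sum>b<r. inner (g a) (g' b) *\<^sub>R g' b)"
      using ge by simp
    also have "\<dots> = (\<Sum>b<r. \<Sum>b'<r. (inner (g a) (g' b') * inner (g a) (g' b)) *\<^sub>R \<beta> (g' b) (g' b'))"
      by (simp add: bilinear_sum[OF b] sum.cartesian_product bilinear_lmul[OF b] bilinear_rmul[OF b])
    finally show "\<beta> (g a) (g a) = \<dots>" .
  qed
  also have "\<dots> = (\<Sum>b<r. \<Sum>b'<r. (\<Sum>a<r. inner (g a) (g' b') * inner (g a) (g' b)) *\<^sub>R \<beta> (g' b) (g' b'))"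
  proof -
    have "(\<Sum>a<r. \<Sum>b<r. \<Sum>b'<r. (inner (g a) (g' b') * inner (g a) (g' b)) *\<^sub>R \<beta> (g' b) (g' b'))
        = (\<Sum>b<r. \<Sum>a<r. \<Sum>b'<r. (inner (g a) (g' b') * inner (g a) (g' b)) *\<^sub>R \<beta> (g' b) (g' b'))"
      by (rule sum.swap)
    also have "\<dots> = (\<Sum>b<r. \<Sum>b'<r. \<Sum>a<r. (inner (g a) (g' b') * inner (g a) (g' b)) *\<^sub>R \<beta> (g' b) (g' b'))"
      by (rule sum.cong[OF refl], rule sum.swap)
    finally show ?thesis by (simp add: scaleR_sum_left)
  qed
  also have "\<dots> = (\<Sum>b<r. \<Sum>b'<r. (if b = b' then 1 else 0) *\<^sub>R \<beta> (g' b) (g' b'))"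
    by (intro sum.cong refl) (simp add: orth eq_commute)
  also have "\<dots> = (\<Sum>b<r. \<Sum>b'<r. (if b = b' then \<beta> (g' b) (g' b') else 0))"
    by (intro sum.cong refl) simp
  also have "\<dots> = (\<Sum>a<r. \<beta> (g' a) (g' a))"
    by (simp add: sum.delta)
  finally show ?thesis .
qed



lemma tri_sum:
  fixes F :: "nat \<Rightarrow> nat \<Rightarrow> real"
  assumes sym: "\<And>a b. F a b = F b a"
  shows "2 * (\<Sum>b<r. \<Sum>a<b. F a b) = (\<Sum>a<r. \<Sum>b<r. F a b) - (\<Sum>a<r. F a a)"
proof (induction r)
  case 0 then show ?case by simp
next
  case (Suc r)
  have "(\<Sum>a<Suc r. \<Sum>b<Suc r. F a b) = (\<Sum>a<r. \<Sum>b<r. F a b) + (\<Sum>a<r. F a r) + (\<Sum>b<r. F r b) + F r r"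
    by (simp add: sum.distrib)
  also have "(\<Sum>b<r. F r b) = (\<Sum>a<r. F a r)" using sym by (intro sum.cong) auto
  finally show ?case using Suc by simp
qed

lemma lag_bil: "lagrangian_sff sff \<Longrightarrow> bilinear sff" by (simp add: lagrangian_sff_def)
lemma lag_sym: "lagrangian_sff sff \<Longrightarrow> sff x y = sff y x" by (simp add: lagrangian_sff_def)
lemma lag_cub: "lagrangian_sff sff \<Longrightarrow> inner (sff x y) z = inner (sff x z) y" by (simp add: lagrangian_sff_def)

lemma tau_formula:
  assumes lag: "lagrangian_sff sff"
  shows "2 * tau_basis c sff g r = real r * real r * c - real r * c
     + (norm (\<Sum>a<r. sff (g a) (g a)))^2 - (\<Sum>a<r. \<Sum>b<r. (norm (sff (g a) (g b)))^2)"
proof -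
  let ?F = "\<lambda>a b. sec_curv c sff (g a) (g b)"
  have sym: "?F a b = ?F b a" for a b
    by (simp add: sec_curv_def lag_sym[OF lag] inner_commute)
  have "2 * tau_basis c sff g r = (\<Sum>a<r. \<Sum>b<r. ?F a b) - (\<Sum>a<r. ?F a a)"
    unfolding tau_basis_def by (rule tri_sum[OF sym])
  also have "(\<Sum>a<r. ?F a a) = real r * c"
    by (simp add: sec_curv_def power2_norm_eq_inner)
  also have "(\<Sum>a<r. \<Sum>b<r. ?F a b) = (\<Sum>a<r. \<Sum>b<r. c) + (\<Sum>a<r. \<Sum>b<r. inner (sff (g a) (g a)) (sff (g b) (g b)))
      - (\<Sum>a<r. \<Sum>b<r. (norm (sff (g a) (g b)))^2)"
    by (simp add: sec_curv_def sum.distrib sum_subtractf)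
  also have "(\<Sum>a<r. \<Sum>b<r. inner (sff (g a) (g a)) (sff (g b) (g b))) = (norm (\<Sum>a<r. sff (g a) (g a)))^2"
    by (simp add: power2_norm_eq_inner inner_sum_left inner_sum_right, rule sum.swap)
  finally show ?thesis by simp
qed

lemma bil_x:
  assumes lag: "lagrangian_sff sff"
  shows "bilinear (\<lambda>y z. inner (sff x y) (sff x z))"
  using lag_bil[OF lag]
  unfolding bilinear_def linear_iff
  by (auto simp: bilinear_radd bilinear_rmul inner_add_left inner_add_right)

lemma tau_inv:
  assumes lag: "lagrangian_sff sff" and o: "onf g r" and o': "onf g' r"
    and sp: "span (g ` {..<r}) = span (g' ` {..<r})"
  shows "tau_basis c sff g r = tau_basis c sff g' r"
proof -
  have b: "bilinear sff" using lag_bil[OF lag] .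
  have 1: "(\<Sum>a<r. sff (g a) (g a)) = (\<Sum>a<r. sff (g' a) (g' a))"
    by (rule trace_inv[OF b o o' sp])
  have x: "(\<Sum>b<r. (norm (sff x (g b)))^2) = (\<Sum>b<r. (norm (sff x (g' b)))^2)" for x
    using trace_inv[OF bil_x[OF lag, of x] o o' sp] by (simp add: power2_norm_eq_inner)
  have s1: "(\<Sum>a<r. \<Sum>b<r. (norm (sff (g a) (g b)))^2) = (\<Sum>a<r. \<Sum>b<r. (norm (sff (g a) (g' b)))^2)"
    by (rule sum.cong[OF refl], rule x)
  have s2: "(\<Sum>a<r. \<Sum>b<r. (norm (sff (g a) (g' b)))^2) = (\<Sum>b<r. \<Sum>a<r. (norm (sff (g' b) (g a)))^2)"
    by (subst sum.swap) (simp add: lag_sym[OF lag])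
  have s3: "(\<Sum>b<r. \<Sum>a<r. (norm (sff (g' b) (g a)))^2) = (\<Sum>b<r. \<Sum>a<r. (norm (sff (g' b) (g' a)))^2)"
    by (rule sum.cong[OF refl], rule x)
  have s4: "(\<Sum>b<r. \<Sum>a<r. (norm (sff (g' b) (g' a)))^2) = (\<Sum>a<r. \<Sum>b<r. (norm (sff (g' a) (g' b)))^2)"
    by (subst sum.swap) (simp add: lag_sym[OF lag])
  have 2: "(\<Sum>a<r. \<Sum>b<r. (norm (sff (g a) (g b)))^2) = (\<Sum>a<r. \<Sum>b<r. (norm (sff (g' a) (g' b)))^2)"
    using s1 s2 s3 s4 by simp
  show ?thesis using tau_formula[OF lag, of c g r] tau_formula[OF lag, of c g' r] 1 2 by simp
qed

lemma tau_sub_eval: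
  assumes lag: "lagrangian_sff sff" and o: "onf g r" and L: "L = span (g ` {..<r})"
  shows "tau_sub c sff L = tau_basis c sff g r"
proof -
  have d: "dim L = r" using L onf_dim[OF o] by simp
  have ob: "orthonormal_basis_of L g (dim L)"
    unfolding orthonormal_basis_of_def d
  proof (intro conjI allI impI)
    fix i assume "i < r" thus "g i \<in> L" unfolding L by (intro span_base) simp
  next
    fix i j assume "i < r" "j < r"
    thus "inner (g i) (g j) = (if i = j then 1 else 0)" using o unfolding onf_def by blast
  next
    show "span (g ` {..<r}) = L" using L by simp
  qed
  have ex: "\<exists>t. \<exists>e. orthonormal_basis_of L e (dim L) \<and> t = tau_basis c sff e (dim L)"
    using ob by blast
  have "\<exists>e. orthonormal_basis_of L e (dim L) \<and> tau_sub c sff L = tau_basis c sff e (dim L)"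
    unfolding tau_sub_def by (rule someI_ex[OF ex])
  then obtain e where e: "orthonormal_basis_of L e (dim L)" and t: "tau_sub c sff L = tau_basis c sff e (dim L)"
    by blast
  have e': "(\<forall>i<r. e i \<in> L) \<and> (\<forall>i<r. \<forall>j<r. inner (e i) (e j) = (if i = j then 1 else 0)) \<and> span (e ` {..<r}) = L"
    using e unfolding orthonormal_basis_of_def d .
  have oe: "onf e r" using e' unfolding onf_def by blast
  have "span (e ` {..<r}) = span (g ` {..<r})" using e' L by simp
  hence "tau_basis c sff e r = tau_basis c sff g r" by (rule tau_inv[OF lag oe o])
  thus ?thesis using t d by simp
qed



lemma sum_split_add: fixes m :: nat and G :: "nat \<Rightarrow> 'a::comm_monoid_add" shows "(\<Sum>a<k+m. G a) = (\<Sum>a<k. G a) + (\<Sum>a<m. G (a+k))"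
  by (induction m) (auto simp: ac_simps)

lemma tri_split:
  fixes F :: "nat \<Rightarrow> nat \<Rightarrow> real"
  shows "(\<Sum>b<k+m. \<Sum>a<b. F a b) = (\<Sum>b<k. \<Sum>a<b. F a b) + (\<Sum>b<m. \<Sum>a<b. F (a+k) (b+k)) + (\<Sum>a<k. \<Sum>b<m. F a (b+k))"
proof (induction m)
  case 0 then show ?case by simp
next
  case (Suc m)
  have "(\<Sum>b<k + Suc m. \<Sum>a<b. F a b) = (\<Sum>b<k+m. \<Sum>a<b. F a b) + (\<Sum>a<k+m. F a (k+m))"
    by simp
  also have "(\<Sum>a<k+m. F a (k+m)) = (\<Sum>a<k. F a (m+k)) + (\<Sum>a<m. F (a+k) (m+k))"
    by (subst sum_split_add) (simp add: add.commute)
  finally show ?case using Suc by (simp add: sum.distrib)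
qed

definition mixf :: "real \<Rightarrow> (real^'n \<Rightarrow> real^'n \<Rightarrow> real^'n) \<Rightarrow> (nat \<Rightarrow> real^'n) \<Rightarrow> nat \<Rightarrow> real" where
  "mixf c sff f m = (\<Sum>a<2. \<Sum>b<m. sec_curv c sff (f a) (f (b+2)))"

lemma onf_sub1: "onf f (2+m) \<Longrightarrow> onf f 2" by (simp add: onf_def)
lemma onf_sub2: "onf f (2+m) \<Longrightarrow> onf (\<lambda>j. f (j+2)) m" by (simp add: onf_def)

lemma frame_mix:
  fixes f :: "nat \<Rightarrow> real^'n"
  assumes lag: "lagrangian_sff sff" and n: "CARD('n) = 2 + m" and o: "onf f (2+m)"
  shows "tau_sub c sff UNIV - (tau_sub c sff (span (f ` {..<2})) + tau_sub c sff (span ((\<lambda>j. f (j+2)) ` {..<m})))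
       = mixf c sff f m"
proof -
  have U: "tau_sub c sff UNIV = tau_basis c sff f (2+m)"
    using tau_sub_eval[OF lag o] onf_full[of f] o n by simp
  have 1: "tau_sub c sff (span (f ` {..<2})) = tau_basis c sff f 2"
    using tau_sub_eval[OF lag onf_sub1[OF o]] by simp
  have 2: "tau_sub c sff (span ((\<lambda>j. f (j+2)) ` {..<m})) = tau_basis c sff (\<lambda>j. f (j+2)) m"
    using tau_sub_eval[OF lag onf_sub2[OF o]] by simp
  have "tau_basis c sff f (2+m) = tau_basis c sff f 2 + tau_basis c sff (\<lambda>j. f (j+2)) m + mixf c sff f m"
    unfolding tau_basis_def mixf_def by (rule tri_split)
  thus ?thesis using U 1 2 by simp
qed

lemma span_orth:
  assumes "\<And>u v. u \<in> A \<Longrightarrow> v \<in> B \<Longrightarrow> inner u v = 0" and "x \<in> span A" and "y \<in> span B"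
  shows "inner x y = 0"
proof -
  have "orthogonal u y" if "u \<in> A" for u
    using orthogonal_to_span[OF assms(3), of u] assms(1) that by (simp add: orthogonal_def)
  hence "orthogonal y x"
    using orthogonal_to_span[OF assms(2), of y] by (simp add: orthogonal_commute)
  thus ?thesis by (simp add: orthogonal_def inner_commute)
qed

lemma frame_in_S:
  fixes f :: "nat \<Rightarrow> real^'n"
  assumes n: "CARD('n) = 2 + m" and o: "onf f (2+m)"
  shows "subspace (span (f ` {..<2})) \<and> subspace (span ((\<lambda>j. f (j+2)) ` {..<m}))
    \<and> dim (span (f ` {..<2})) = 2 \<and> dim (span ((\<lambda>j. f (j+2)) ` {..<m})) = CARD('n) - 2
    \<and> (\<forall>x\<in>span (f ` {..<2}). \<forall>y\<in>span ((\<lambda>j. f (j+2)) ` {..<m}). inner x y = 0)"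
proof (intro conjI ballI)
  show "dim (span (f ` {..<2})) = 2" using onf_dim[OF onf_sub1[OF o]] .
  show "dim (span ((\<lambda>j. f (j+2)) ` {..<m})) = CARD('n) - 2" using onf_dim[OF onf_sub2[OF o]] n by simp
  fix x y assume "x \<in> span (f ` {..<2})" "y \<in> span ((\<lambda>j. f (j+2)) ` {..<m})"
  thus "inner x y = 0"
    by (rule span_orth[rotated]) (use o in \<open>auto simp: onf_def\<close>)
qed auto

lemma enum_onb:
  fixes L :: "(real^'n) set"
  assumes "subspace L"
  obtains g where "onf g (dim L)" "span (g ` {..<dim L}) = L" "g ` {..<dim L} \<subseteq> L"
proof -
  obtain B where B: "B \<subseteq> L" "pairwise orthogonal B" "\<And>x. x \<in> B \<Longrightarrow> norm x = 1"
    "independent B" "card B = dim L" "span B = L"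
    using orthonormal_basis_subspace[OF assms] by metis
  have "finite B" using B(4) by (simp add: independent_imp_finite)
  then obtain h where h: "bij_betw h {0..<card B} B" using ex_bij_betw_nat_finite by blast
  have img: "h ` {..<dim L} = B" using h B(5) by (simp add: bij_betw_def atLeast0LessThan)
  have "onf h (dim L)"
    unfolding onf_def
  proof (intro allI impI)
    fix i j assume ij: "i < dim L" "j < dim L"
    hence hi: "h i \<in> B" "h j \<in> B" using img by auto
    show "inner (h i) (h j) = (if i = j then 1 else 0)"
    proof (cases "i = j")
      case True thus ?thesis using B(3)[OF hi(1)] by (simp add: power2_norm_eq_inner[symmetric])
    next
      case False
      hence "h i \<noteq> h j" using h ij B(5) unfolding bij_betw_def inj_on_def by auto
      thus ?thesis using B(2) hi False by (auto simp: pairwise_def orthogonal_def)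
    qed
  qed
  thus ?thesis using that img B by auto
qed

lemma S_frame:
  fixes L1 L2 :: "(real^'n) set"
  assumes n: "CARD('n) = 2 + m" and s1: "subspace L1" and s2: "subspace L2"
    and d1: "dim L1 = 2" and d2: "dim L2 = CARD('n) - 2"
    and orth: "\<forall>x\<in>L1. \<forall>y\<in>L2. inner x y = 0"
  obtains f where "onf f (2+m)" "L1 = span (f ` {..<2})" "L2 = span ((\<lambda>j. f (j+2)) ` {..<m})"
proof -
  obtain g1 where g1: "onf g1 2" "span (g1 ` {..<2}) = L1" "g1 ` {..<2} \<subseteq> L1"
    using enum_onb[OF s1] d1 by metis
  obtain g2 where g2: "onf g2 m" "span (g2 ` {..<m}) = L2" "g2 ` {..<m} \<subseteq> L2"
    using enum_onb[OF s2] d2 n by (metis add_diff_cancel_left')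
  define f where "f k = (if k < 2 then g1 k else g2 (k-2))" for k
  have "onf f (2+m)"
    unfolding onf_def
  proof (intro allI impI)
    fix i j assume ij: "i < 2+m" "j < 2+m"
    show "inner (f i) (f j) = (if i = j then 1 else 0)"
    proof (cases "i < 2"; cases "j < 2")
      assume "i < 2" "j < 2" thus ?thesis using g1(1) by (simp add: f_def onf_def)
    next
      assume a: "i < 2" "\<not> j < 2"
      hence "g1 i \<in> L1" "g2 (j-2) \<in> L2" using g1(3) g2(3) ij by auto
      thus ?thesis using orth a by (simp add: f_def)
    next
      assume a: "\<not> i < 2" "j < 2"
      hence "g1 j \<in> L1" "g2 (i-2) \<in> L2" using g1(3) g2(3) ij by auto
      thus ?thesis using orth a by (simp add: f_def inner_commute)
    next
      assume a: "\<not> i < 2" "\<not> j < 2"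
      thus ?thesis using g2(1) ij by (auto simp: f_def onf_def)
    qed
  qed
  moreover have "f ` {..<2} = g1 ` {..<2}" by (auto simp: f_def)
  moreover have "(\<lambda>j. f (j+2)) ` {..<m} = g2 ` {..<m}" by (auto simp: f_def)
  ultimately show ?thesis using that g1 g2 by metis
qed



lemma cont_sff:
  assumes lag: "lagrangian_sff sff" and "continuous_on S u" "continuous_on S v"
  shows "continuous_on S (\<lambda>x. sff (u x) (v x))"
proof -
  have "bounded_bilinear sff" using lag_bil[OF lag] bilinear_conv_bounded_bilinear by blast
  thus ?thesis using bounded_bilinear.continuous_on assms(2,3) by blast
qed

lemma cont_sec:
  assumes lag: "lagrangian_sff sff" and u: "continuous_on S u" and v: "continuous_on S v"
  shows "continuous_on S (\<lambda>x. sec_curv c sff (u x) (v x))"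
  unfolding sec_curv_def
  by (intro continuous_intros cont_sff[OF lag] u v)

definition Kset :: "(real^('n::finite)^'n) set" where
  "Kset = {A. \<forall>i j. inner (A$i) (A$j) = (if i = j then 1 else 0)}"

lemma Kset_compact: "compact (Kset::(real^'n^'n) set)"
proof (rule compact_eq_bounded_closed[THEN iffD2], rule conjI)
  have "(Kset::(real^'n^'n) set) \<subseteq> cball 0 (real CARD('n))"
  proof
    fix A :: "real^'n^'n" assume A: "A \<in> (Kset::(real^'n^'n) set)"
    have "norm A \<le> (\<Sum>i\<in>UNIV. norm (A$i))"
      unfolding norm_vec_def by (rule L2_set_le_sum) simp
    also have "\<dots> = (\<Sum>i\<in>(UNIV::'n set). 1)"
    proof (rule sum.cong[OF refl])
      fix i
      have "inner (A$i) (A$i) = 1" using A by (simp add: Kset_def)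
      thus "norm (A$i) = 1" by (simp add: norm_eq_sqrt_inner)
    qed
    finally show "A \<in> cball 0 (real CARD('n))" by simp
  qed
  thus "bounded (Kset::(real^'n^'n) set)" by (rule bounded_subset[OF bounded_cball])
  have "(Kset::(real^'n^'n) set) = {A. \<forall>i. \<forall>j. inner (A$i) (A$j) = (if i = j then 1 else 0)}" by (simp add: Kset_def)
  also have "closed \<dots>"
    by (intro closed_Collect_all closed_Collect_eq continuous_intros)
  finally show "closed (Kset::(real^'n^'n) set)" .
qed

lemma Kset_ne: "(\<chi> i. axis i 1) \<in> (Kset::(real^'n^'n) set)"
  by (simp add: Kset_def inner_axis_axis)

lemma exists_max_frame:
  fixes sff :: "real^'n \<Rightarrow> real^'n \<Rightarrow> real^'n"
  assumes lag: "lagrangian_sff sff" and n: "CARD('n) = 2 + m"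
  obtains f where "onf f (2+m)" "\<And>g. onf g (2+m) \<Longrightarrow> mixf c sff g m \<le> mixf c sff f m"
proof -
  obtain \<sigma> where \<sigma>: "bij_betw \<sigma> {0..<CARD('n)} (UNIV::'n set)"
    using ex_bij_betw_nat_finite[of "UNIV::'n set"] by auto
  define \<phi> where "\<phi> A = mixf c sff (\<lambda>k. (A::real^'n^'n) $ \<sigma> k) m" for A
  have "continuous_on (Kset::(real^'n^'n) set) \<phi>"
    unfolding \<phi>_def mixf_def
    by (intro continuous_on_sum cont_sec[OF lag] continuous_intros)
  then obtain A where A: "A \<in> (Kset::(real^'n^'n) set)" "\<And>B. B \<in> (Kset::(real^'n^'n) set) \<Longrightarrow> \<phi> B \<le> \<phi> A"
    using continuous_attains_sup[OF Kset_compact] Kset_ne by blast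
  have inj: "inj_on \<sigma> {..<2+m}" using \<sigma> n by (simp add: bij_betw_def atLeast0LessThan)
  have frame: "onf (\<lambda>k. B $ \<sigma> k) (2+m)" if "B \<in> (Kset::(real^'n^'n) set)" for B :: "real^'n^'n"
    using that inj unfolding onf_def Kset_def inj_on_def by auto
  show ?thesis
  proof (rule that[OF frame[OF A(1)]])
    fix g :: "nat \<Rightarrow> real^'n" assume g: "onf g (2+m)"
    define \<tau> where "\<tau> = inv_into {..<2+m} \<sigma>"
    define B where "B = (\<chi> i. g (\<tau> i))"
    have \<tau>1: "\<tau> (\<sigma> k) = k" if "k < 2+m" for k
      using inv_into_f_f[OF inj] that by (simp add: \<tau>_def)
    have im: "i \<in> \<sigma> ` {..<2+m}" for i
      using \<sigma> n unfolding bij_betw_def atLeast0LessThan by auto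
    have \<tau>2: "\<tau> i < 2+m" "\<sigma> (\<tau> i) = i" for i
      using inv_into_into[OF im[of i]] f_inv_into_f[OF im[of i]] unfolding \<tau>_def by auto
    have "B \<in> (Kset::(real^'n^'n) set)"
      unfolding Kset_def B_def using g \<tau>2 unfolding onf_def
      by auto (metis \<tau>2(2))+
    hence "\<phi> B \<le> \<phi> A" by (rule A(2))
    moreover have "\<phi> B = mixf c sff g m"
      unfolding \<phi>_def mixf_def B_def using \<tau>1 by simp
    ultimately show "mixf c sff g m \<le> mixf c sff (\<lambda>k. A $ \<sigma> k) m" by (simp add: \<phi>_def)
  qed
qed



lemma sum2: "(\<Sum>a<(2::nat). G a) = G 0 + G 1"
  by (simp add: numeral_2_eq_2)

lemma sq_trace:
  fixes x :: "nat \<Rightarrow> nat \<Rightarrow> real"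
  assumes m: "m > 0"
  shows "(\<Sum>j<m. \<Sum>k<m. (x j k - (if j = k then (\<Sum>l<m. x l l)/m else 0))^2)
       = (\<Sum>j<m. \<Sum>k<m. (x j k)^2) - (\<Sum>l<m. x l l)^2/m"
proof -
  define s where "s = (\<Sum>l<m. x l l)"
  have e: "(x j k - (if j = k then s/m else 0))^2 = (x j k)^2 - (if j = k then 2 * (x j k * (s/m)) else 0)
     + (if j = k then (s/m)^2 else 0)" for j k
    by (auto simp: power2_eq_square algebra_simps)
  have "(\<Sum>j<m. \<Sum>k<m. (x j k - (if j = k then s/m else 0))^2)
     = (\<Sum>j<m. \<Sum>k<m. (x j k)^2) - 2 * (\<Sum>j<m. x j j * (s/m)) + (\<Sum>j<m. (s/m)^2)"
    by (simp add: e sum.distrib sum_subtractf sum_distrib_left)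
  also have "(\<Sum>j<m. x j j * (s/m)) = s * s / m" by (subst sum_distrib_right[symmetric]) (simp add: s_def)
  also have "(\<Sum>j<m. (s/m)^2) = s * s / m" using m by (simp add: power2_eq_square)
  finally show ?thesis unfolding s_def[symmetric] by (simp add: power2_eq_square)
qed

lemma Qf_pos:
  fixes p q \<kappa> :: real
  assumes k1: "\<kappa> > 1/6" and k2: "\<kappa> < 1/2"
  shows "\<kappa>*(p+q)^2 - p*q + p^2/2 \<ge> 0"
    and "\<kappa>*(p+q)^2 - p*q + p^2/2 = 0 \<Longrightarrow> p = 0 \<and> q = 0"
proof -
  have id: "4*(\<kappa>+1/2) * (\<kappa>*(p+q)^2 - p*q + p^2/2) = (2*(\<kappa>+1/2)*p + (2*\<kappa>-1)*q)^2 + (6*\<kappa>-1)*q^2"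
    by (simp add: power2_eq_square algebra_simps)
  have a: "(2*(\<kappa>+1/2)*p + (2*\<kappa>-1)*q)^2 \<ge> 0" "(6*\<kappa>-1)*q^2 \<ge> 0" using k1 by auto
  have pos: "4*(\<kappa>+1/2) > 0" using k1 by simp
  show "\<kappa>*(p+q)^2 - p*q + p^2/2 \<ge> 0"
    using id a pos by (metis add_nonneg_nonneg zero_le_mult_iff not_less)
  assume z: "\<kappa>*(p+q)^2 - p*q + p^2/2 = 0"
  hence "(2*(\<kappa>+1/2)*p + (2*\<kappa>-1)*q)^2 + (6*\<kappa>-1)*q^2 = 0" using id by simp
  hence "(2*(\<kappa>+1/2)*p + (2*\<kappa>-1)*q)^2 = 0" "(6*\<kappa>-1)*q^2 = 0" using a by linarith+
  hence "q = 0" using k1 by simp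
  moreover have "p = 0" using \<open>(2*(\<kappa>+1/2)*p + (2*\<kappa>-1)*q)^2 = 0\<close> \<open>q = 0\<close> k1 by simp
  ultimately show "p = 0 \<and> q = 0" by simp
qed



lemma core_id:
  fixes T :: "nat \<Rightarrow> nat \<Rightarrow> nat \<Rightarrow> real" and m :: nat
  assumes s1: "\<And>a b c. T a b c = T b a c" and s2: "\<And>a b c. T a b c = T a c b"
  shows "(\<Sum>a<2. \<Sum>j<m. \<Sum>r<2+m. T a a r * T (j+2) (j+2) r - (T a (j+2) r)^2)
     = (T 0 0 0 + T 1 1 0) * (\<Sum>l<m. T (l+2) (l+2) 0) + (T 0 0 1 + T 1 1 1) * (\<Sum>l<m. T (l+2) (l+2) 1)
       - (\<Sum>j<m. (T 0 0 (j+2))^2 + 2*(T 0 1 (j+2))^2 + (T 1 1 (j+2))^2)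
       + (\<Sum>k<m. (T 0 0 (k+2) + T 1 1 (k+2)) * (\<Sum>l<m. T (l+2) (l+2) (k+2)))
       - (\<Sum>a<2. \<Sum>j<m. \<Sum>k<m. (T a (j+2) (k+2))^2)"
proof -
  have e1: "T 0 (j+2) 0 = T 0 0 (j+2)" "T 0 (j+2) 1 = T 0 1 (j+2)" "T 1 (j+2) 0 = T 0 1 (j+2)"
    "T 1 (j+2) 1 = T 1 1 (j+2)" for j
    by (metis s1 s2)+
  have perj: "(\<Sum>a<2. \<Sum>r<2+m. T a a r * T (j+2) (j+2) r - (T a (j+2) r)^2)
     = T 0 0 0 * T (j+2) (j+2) 0 + T 1 1 0 * T (j+2) (j+2) 0 + T 0 0 1 * T (j+2) (j+2) 1 + T 1 1 1 * T (j+2) (j+2) 1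
       - ((T 0 0 (j+2))^2 + 2*(T 0 1 (j+2))^2 + (T 1 1 (j+2))^2)
       + (\<Sum>k<m. (T 0 0 (k+2) + T 1 1 (k+2)) * T (j+2) (j+2) (k+2))
       - (\<Sum>a<2. \<Sum>k<m. (T a (j+2) (k+2))^2)" for j
    apply (simp only: sum_split_add sum2 e1)
    apply (simp add: sum.distrib sum_subtractf algebra_simps)
    done
  have "(\<Sum>a<2. \<Sum>j<m. \<Sum>r<2+m. T a a r * T (j+2) (j+2) r - (T a (j+2) r)^2)
      = (\<Sum>j<m. \<Sum>a<2. \<Sum>r<2+m. T a a r * T (j+2) (j+2) r - (T a (j+2) r)^2)"
    by (rule sum.swap)
  also have "\<dots> = (\<Sum>j<m. T 0 0 0 * T (j+2) (j+2) 0 + T 1 1 0 * T (j+2) (j+2) 0 + T 0 0 1 * T (j+2) (j+2) 1 + T 1 1 1 * T (j+2) (j+2) 1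
       - ((T 0 0 (j+2))^2 + 2*(T 0 1 (j+2))^2 + (T 1 1 (j+2))^2)
       + (\<Sum>k<m. (T 0 0 (k+2) + T 1 1 (k+2)) * T (j+2) (j+2) (k+2))
       - (\<Sum>a<2. \<Sum>k<m. (T a (j+2) (k+2))^2))"
    by (rule sum.cong[OF refl], rule perj)
  also have "\<dots> = (T 0 0 0 + T 1 1 0) * (\<Sum>l<m. T (l+2) (l+2) 0) + (T 0 0 1 + T 1 1 1) * (\<Sum>l<m. T (l+2) (l+2) 1)
       - (\<Sum>j<m. (T 0 0 (j+2))^2 + 2*(T 0 1 (j+2))^2 + (T 1 1 (j+2))^2)
       + (\<Sum>j<m. \<Sum>k<m. (T 0 0 (k+2) + T 1 1 (k+2)) * T (j+2) (j+2) (k+2))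
       - (\<Sum>j<m. \<Sum>a<2. \<Sum>k<m. (T a (j+2) (k+2))^2)"
    by (simp add: sum.distrib sum_subtractf sum_distrib_left algebra_simps)
  also have "(\<Sum>j<m. \<Sum>k<m. (T 0 0 (k+2) + T 1 1 (k+2)) * T (j+2) (j+2) (k+2))
      = (\<Sum>k<m. (T 0 0 (k+2) + T 1 1 (k+2)) * (\<Sum>l<m. T (l+2) (l+2) (k+2)))"
    by (subst sum.swap) (simp add: sum_distrib_left)
  also have "(\<Sum>j<m. \<Sum>a<2. \<Sum>k<m. (T a (j+2) (k+2))^2) = (\<Sum>a<2. \<Sum>j<m. \<Sum>k<m. (T a (j+2) (k+2))^2)"
    by (rule sum.swap)
  finally show ?thesis .
qed



lemma core:
  fixes T :: "nat \<Rightarrow> nat \<Rightarrow> nat \<Rightarrow> real" and m :: nat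
  assumes m3: "m \<ge> 3" and s1: "\<And>a b c. T a b c = T b a c" and s2: "\<And>a b c. T a b c = T a c b"
  defines "D \<equiv> real m/(4*(real m+1)) * (\<Sum>r<2+m. (\<Sum>i<2+m. T i i r)^2)
      - (\<Sum>a<2. \<Sum>j<m. \<Sum>r<2+m. T a a r * T (j+2) (j+2) r - (T a (j+2) r)^2)"
  shows "D \<ge> 0"
    and "D = 0 \<Longrightarrow> (\<forall>k<m. T 0 0 (k+2) = 0 \<and> T 1 1 (k+2) = 0 \<and> T 0 1 (k+2) = 0
              \<and> (\<Sum>l<m. T (l+2) (l+2) (k+2)) = 0)
         \<and> (\<forall>a<2. \<forall>j<m. \<forall>k<m. T a (j+2) (k+2) = (if j = k then (\<Sum>l<m. T (l+2) (l+2) a)/m else 0))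
         \<and> (\<forall>b<2. T 0 0 b + T 1 1 b = (real m + 2)/m * (\<Sum>l<m. T (l+2) (l+2) b))"
proof -
  define \<kappa> where "\<kappa> = real m/(4*(real m+1))"
  define \<rho> where "\<rho> = (real m + 2)/m"
  define U where "U b = T 0 0 b + T 1 1 b" for b
  define W where "W b = (\<Sum>l<m. T (l+2) (l+2) b)" for b
  define P where "P k = T 0 0 (k+2) + T 1 1 (k+2)" for k
  define Q where "Q k = (\<Sum>l<m. T (l+2) (l+2) (k+2))" for k
  have mpos: "real m > 0" using m3 by simp
  have k1: "\<kappa> > 1/6" using m3 unfolding \<kappa>_def by (simp add: field_simps)
  have k2: "\<kappa> < 1/2" using m3 unfolding \<kappa>_def by (simp add: field_simps)
  have inner: "(\<Sum>i<2+m. T i i r) = U r + W r" for r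
    unfolding sum_split_add sum2 U_def W_def by simp
  have A: "(\<Sum>r<2+m. (\<Sum>i<2+m. T i i r)^2) = (U 0 + W 0)^2 + (U 1 + W 1)^2 + (\<Sum>k<m. (P k + Q k)^2)"
    unfolding inner sum_split_add sum2 by (simp add: U_def W_def P_def Q_def)
  have B: "(\<Sum>a<2. \<Sum>j<m. \<Sum>r<2+m. T a a r * T (j+2) (j+2) r - (T a (j+2) r)^2)
     = U 0 * W 0 + U 1 * W 1
       - (\<Sum>j<m. (T 0 0 (j+2))^2 + 2*(T 0 1 (j+2))^2 + (T 1 1 (j+2))^2)
       + (\<Sum>k<m. P k * Q k)
       - (\<Sum>a<2. \<Sum>j<m. \<Sum>k<m. (T a (j+2) (k+2))^2)"
    by (rule trans[OF core_id[OF s1 s2]]) (simp add: U_def W_def P_def Q_def)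
  define N1 where "N1 = \<kappa> * (U 0 - \<rho> * W 0)^2 + \<kappa> * (U 1 - \<rho> * W 1)^2"
  define N2 where "N2 = (\<Sum>k<m. \<kappa>*(P k + Q k)^2 - P k * Q k + (P k)^2/2)"
  define N3 where "N3 = (\<Sum>j<m. (T 0 0 (j+2) - T 1 1 (j+2))^2/2 + 2*(T 0 1 (j+2))^2)"
  define N4 where "N4 = (\<Sum>a<2. \<Sum>j<m. \<Sum>k<m. (T a (j+2) (k+2) - (if j = k then W a/m else 0))^2)"
  have pb: "\<kappa>*(U b + W b)^2 - U b * W b = \<kappa> * (U b - \<rho> * W b)^2 - (W b)^2/m" for b
  proof -
    have "real m * (real m * 4) \<ge> 0" by simp
    hence nz: "real m * 4 + real m * (real m * 4) \<noteq> 0" using mpos by linarith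
    have h1: "\<kappa>*(1+\<rho>) = 1/2" using mpos nz unfolding \<kappa>_def \<rho>_def by (simp add: field_simps)
    have h2: "1 - \<rho> = -2/m" using mpos unfolding \<rho>_def by (simp add: field_simps)
    have "\<kappa>*(U b + W b)^2 - \<kappa> * (U b - \<rho> * W b)^2 = (\<kappa>*(1+\<rho>)) * W b * (2 * U b + (1 - \<rho>) * W b)"
      by (simp add: power2_eq_square algebra_simps)
    also have "\<dots> = U b * W b - (W b)^2/m" unfolding h1 h2 by (simp add: power2_eq_square algebra_simps)
    finally show ?thesis by simp
  qed
  have p3: "(\<Sum>j<m. (T 0 0 (j+2))^2 + 2*(T 0 1 (j+2))^2 + (T 1 1 (j+2))^2) = N3 + (\<Sum>j<m. (P j)^2/2)"
  proof -
    have "(\<Sum>j<m. (T 0 0 (j+2))^2 + 2*(T 0 1 (j+2))^2 + (T 1 1 (j+2))^2)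
      = (\<Sum>j<m. ((T 0 0 (j+2) - T 1 1 (j+2))^2/2 + 2*(T 0 1 (j+2))^2) + (T 0 0 (j+2) + T 1 1 (j+2))^2/2)"
      by (rule sum.cong[OF refl]) (simp add: power2_eq_square field_simps)
    thus ?thesis unfolding N3_def P_def by (simp add: sum.distrib)
  qed
  have p2: "(\<Sum>k<m. \<kappa>*(P k + Q k)^2 - P k * Q k) = N2 - (\<Sum>k<m. (P k)^2/2)"
    unfolding N2_def by (simp add: sum.distrib sum_subtractf)
  have tr: "(\<Sum>l<m. T a (l+2) (l+2)) = W a" for a
    unfolding W_def by (metis s1 s2)
  have p4a: "(\<Sum>j<m. \<Sum>k<m. (T a (j+2) (k+2))^2) = (\<Sum>j<m. \<Sum>k<m. (T a (j+2) (k+2) - (if j = k then W a/m else 0))^2) + (W a)^2/m" for a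
  proof -
    have m0: "m > 0" using m3 by simp
    note st = sq_trace[OF m0, of "\<lambda>j k. T a (j+2) (k+2)"]
    show ?thesis using st unfolding tr by simp
  qed
  have p4: "(\<Sum>a<2. \<Sum>j<m. \<Sum>k<m. (T a (j+2) (k+2))^2) = N4 + (W 0)^2/m + (W 1)^2/m"
    unfolding N4_def sum2 p4a by simp
  have Deq: "D = N1 + N2 + N3 + N4"
  proof -
    have "D = (\<kappa>*(U 0 + W 0)^2 - U 0 * W 0) + (\<kappa>*(U 1 + W 1)^2 - U 1 * W 1)
        + (\<Sum>k<m. \<kappa>*(P k + Q k)^2 - P k * Q k)
        + (\<Sum>j<m. (T 0 0 (j+2))^2 + 2*(T 0 1 (j+2))^2 + (T 1 1 (j+2))^2)
        + (\<Sum>a<2. \<Sum>j<m. \<Sum>k<m. (T a (j+2) (k+2))^2)"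
      unfolding D_def \<kappa>_def[symmetric] A B by (simp add: sum_subtractf sum_distrib_left algebra_simps)
    thus ?thesis unfolding pb p2 p3 p4 N1_def by simp
  qed
  have kpos: "\<kappa> > 0" using k1 by simp
  have n1: "N1 \<ge> 0" unfolding N1_def using kpos by simp
  have t2: "\<kappa>*(P k + Q k)^2 - P k * Q k + (P k)^2/2 \<ge> 0" for k using Qf_pos(1)[OF k1 k2] .
  have n2: "N2 \<ge> 0" unfolding N2_def by (rule sum_nonneg) (use t2 in auto)
  have n3: "N3 \<ge> 0" unfolding N3_def by (intro sum_nonneg) auto
  have n4: "N4 \<ge> 0" unfolding N4_def by (intro sum_nonneg) auto
  show "D \<ge> 0" using Deq n1 n2 n3 n4 by simp
  assume "D = 0"
  hence z: "N1 = 0" "N2 = 0" "N3 = 0" "N4 = 0" using Deq n1 n2 n3 n4 by linarith+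
  have z2: "\<kappa>*(P k + Q k)^2 - P k * Q k + (P k)^2/2 = 0" if "k < m" for k
    using z(2) t2 that unfolding N2_def by (subst (asm) sum_nonneg_eq_0_iff) auto
  have PQ: "P k = 0 \<and> Q k = 0" if "k < m" for k using Qf_pos(2)[OF k1 k2 z2[OF that]] .
  have z3: "(T 0 0 (j+2) - T 1 1 (j+2))^2/2 + 2*(T 0 1 (j+2))^2 = 0" if "j < m" for j
    using z(3) that unfolding N3_def by (subst (asm) sum_nonneg_eq_0_iff) auto
  have z4: "(T a (j+2) (k+2) - (if j = k then W a/m else 0))^2 = 0" if "a < 2" "j < m" "k < m" for a j k
  proof -
    have "(\<Sum>j<m. \<Sum>k<m. (T a (j+2) (k+2) - (if j = k then W a/m else 0))^2) = 0"
      using z(4) that(1) unfolding N4_def by (subst (asm) sum_nonneg_eq_0_iff) (auto intro!: sum_nonneg)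
    hence "(\<Sum>k<m. (T a (j+2) (k+2) - (if j = k then W a/m else 0))^2) = 0"
      using that(2) by (subst (asm) sum_nonneg_eq_0_iff) (auto intro: sum_nonneg)
    thus ?thesis using that(3) by (subst (asm) sum_nonneg_eq_0_iff) auto
  qed
  have z1: "(U b - \<rho> * W b)^2 = 0" if "b < 2" for b
  proof -
    have "\<kappa> * (U 0 - \<rho> * W 0)^2 = 0" "\<kappa> * (U 1 - \<rho> * W 1)^2 = 0"
      using z(1) kpos unfolding N1_def by (smt (verit) mult_nonneg_nonneg zero_le_power2)+
    thus ?thesis using that kpos by (cases b) (auto simp: numeral_2_eq_2 less_Suc_eq)
  qed
  show "(\<forall>k<m. T 0 0 (k+2) = 0 \<and> T 1 1 (k+2) = 0 \<and> T 0 1 (k+2) = 0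
              \<and> (\<Sum>l<m. T (l+2) (l+2) (k+2)) = 0)
         \<and> (\<forall>a<2. \<forall>j<m. \<forall>k<m. T a (j+2) (k+2) = (if j = k then (\<Sum>l<m. T (l+2) (l+2) a)/m else 0))
         \<and> (\<forall>b<2. T 0 0 b + T 1 1 b = (real m + 2)/m * (\<Sum>l<m. T (l+2) (l+2) b))"
  proof (intro conjI allI impI)
    fix k assume k: "k < m"
    have q: "(T 0 0 (k+2) - T 1 1 (k+2))^2/2 \<ge> 0" "2*(T 0 1 (k+2))^2 \<ge> 0" by simp_all
    hence "(T 0 0 (k+2) - T 1 1 (k+2))^2 = 0" "(T 0 1 (k+2))^2 = 0" using z3[OF k] by linarith+
    hence a: "T 0 0 (k+2) - T 1 1 (k+2) = 0" "T 0 1 (k+2) = 0" by simp_all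
    show "T 0 0 (k+2) = 0" "T 1 1 (k+2) = 0" using a PQ[OF k] unfolding P_def by auto
    show "T 0 1 (k+2) = 0" by (rule a(2))
    show "(\<Sum>l<m. T (l+2) (l+2) (k+2)) = 0" using PQ[OF k] unfolding Q_def by simp
  next
    fix a j k :: nat assume "a < 2" "j < m" "k < m"
    thus "T a (j+2) (k+2) = (if j = k then (\<Sum>l<m. T (l+2) (l+2) a)/m else 0)"
      using z4 unfolding W_def by fastforce
  next
    fix b :: nat assume "b < 2"
    thus "T 0 0 b + T 1 1 b = (real m + 2)/m * (\<Sum>l<m. T (l+2) (l+2) b)"
      using z1 unfolding U_def W_def \<rho>_def by simp
  qed
qed



lemma inner_frame:
  fixes f :: "nat \<Rightarrow> real^'n"
  assumes n: "CARD('n) = N" and o: "onf f N"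
  shows "inner v w = (\<Sum>r<N. inner v (f r) * inner w (f r))"
proof -
  have "v = (\<Sum>r<N. inner v (f r) *\<^sub>R f r)"
    using expand_span[OF o, of v] onf_full[of f] o n by simp
  hence "inner v w = inner (\<Sum>r<N. inner v (f r) *\<^sub>R f r) w" by simp
  also have "\<dots> = (\<Sum>r<N. inner v (f r) * inner (f r) w)" by (simp add: inner_sum_left)
  finally show ?thesis by (simp add: inner_commute)
qed

lemma mean_frame:
  fixes f :: "nat \<Rightarrow> real^'n" and sff :: "real^'n \<Rightarrow> real^'n \<Rightarrow> real^'n"
  assumes lag: "lagrangian_sff sff" and o: "onf f CARD('n)"
  shows "mean_curv sff = (1 / real CARD('n)) *\<^sub>R (\<Sum>i<CARD('n). sff (f i) (f i))"
proof -
  obtain \<sigma> where \<sigma>: "bij_betw \<sigma> {0..<CARD('n)} (UNIV::'n set)"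
    using ex_bij_betw_nat_finite[of "UNIV::'n set"] by auto
  define g where "g k = (axis (\<sigma> k) 1 :: real^'n)" for k
  have inj: "inj_on \<sigma> {..<CARD('n)}" using \<sigma> by (simp add: bij_betw_def atLeast0LessThan)
  have og: "onf g CARD('n)" using inj unfolding onf_def g_def inj_on_def
    by (auto simp: inner_axis_axis)
  have sp: "span (f ` {..<CARD('n)}) = span (g ` {..<CARD('n)})"
    using onf_full[OF o] onf_full[OF og] by simp
  have "(\<Sum>i\<in>UNIV. sff (axis i 1) (axis i 1)) = (\<Sum>k<CARD('n). sff (g k) (g k))"
    unfolding g_def using sum.reindex_bij_betw[OF \<sigma>, of "\<lambda>i. sff (axis i 1) (axis i 1)"]
    by (simp add: atLeast0LessThan)
  also have "\<dots> = (\<Sum>i<CARD('n). sff (f i) (f i))"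
    using trace_inv[OF lag_bil[OF lag] o og sp] by simp
  finally show ?thesis unfolding mean_curv_def by simp
qed

lemma frame_D:
  fixes f :: "nat \<Rightarrow> real^'n" and sff :: "real^'n \<Rightarrow> real^'n \<Rightarrow> real^'n"
  assumes lag: "lagrangian_sff sff" and n: "CARD('n) = 2 + m" and o: "onf f (2+m)"
  shows "(real CARD('n))^2 * (real CARD('n) - 2) / (4 * (real CARD('n) - 1))
         * inner (mean_curv sff) (mean_curv sff) + 2 * (real CARD('n) - 2) * c - mixf c sff f m
       = real m/(4*(real m+1)) * (\<Sum>r<2+m. (\<Sum>i<2+m. inner (sff (f i) (f i)) (f r))^2)
      - (\<Sum>a<2. \<Sum>j<m. \<Sum>r<2+m. inner (sff (f a) (f a)) (f r) * inner (sff (f (j+2)) (f (j+2))) (f r)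
            - (inner (sff (f a) (f (j+2))) (f r))^2)"
proof -
  have ip: "inner v w = (\<Sum>r<2+m. inner v (f r) * inner w (f r))" for v w
    using inner_frame[OF n o] .
  have H: "mean_curv sff = (1 / real (2+m)) *\<^sub>R (\<Sum>i<2+m. sff (f i) (f i))"
    using mean_frame[OF lag, of f] o n by simp
  have HH: "inner (mean_curv sff) (mean_curv sff) = (1/(real (2+m))^2) * (\<Sum>r<2+m. (\<Sum>i<2+m. inner (sff (f i) (f i)) (f r))^2)"
    unfolding H by (subst ip) (simp add: inner_sum_left power2_eq_square sum_distrib_left algebra_simps)
  have M: "mixf c sff f m = 2 * real m * c + (\<Sum>a<2. \<Sum>j<m. \<Sum>r<2+m. inner (sff (f a) (f a)) (f r) * inner (sff (f (j+2)) (f (j+2))) (f r)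
            - (inner (sff (f a) (f (j+2))) (f r))^2)"
    unfolding mixf_def sec_curv_def power2_norm_eq_inner
    by (subst (1 2) ip) (simp add: sum.distrib sum_subtractf power2_eq_square sum2)
  have co: "(real (2+m))^2 * (real (2+m) - 2) / (4 * (real (2+m) - 1)) * (1/(real (2+m))^2) = real m/(4*(real m+1))"
    by (simp add: field_simps)
  have g: "A * (Z * S) + 2*(real (2+m) - 2)*c - (2*real m*c + B) = (A*Z)*S - B" for A Z S B :: real
    by (simp add: algebra_simps)
  show ?thesis unfolding HH M n g co by (rule refl)
qed



lemma lim_nonneg:
  fixes a b c d e g :: real
  assumes "\<And>s. s > 0 \<Longrightarrow> a + b* s + c* s^2 + d* s^3 + e* s^4 + g* s^5 \<ge> 0"
  shows "a \<ge> 0"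
proof -
  have "((\<lambda>s. a + b* s + c* s^2 + d* s^3 + e* s^4 + g* s^5) \<longlongrightarrow> a + b*0 + c*0^2 + d*0^3 + e*0^4 + g*0^5) (at_right 0)"
    by (intro tendsto_intros)
  hence l: "((\<lambda>s. a + b* s + c* s^2 + d* s^3 + e* s^4 + g* s^5) \<longlongrightarrow> a) (at_right (0::real))" by simp
  have "eventually (\<lambda>s. 0 \<le> a + b* s + c* s^2 + d* s^3 + e* s^4 + g* s^5) (at_right (0::real))"
    using eventually_at_right_less[of "0::real"] by eventually_elim (use assms in auto)
  thus ?thesis using tendsto_lowerbound[OF l] by simp
qed

lemma cube_exp:
  assumes lag: "lagrangian_sff sff"
  shows "inner (sff (x *\<^sub>R u + y *\<^sub>R v) (x *\<^sub>R u + y *\<^sub>R v)) (x *\<^sub>R u + y *\<^sub>R v)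
    = x^3 * inner (sff u u) u + 3 * x^2 * y * inner (sff u u) v + 3 * x * y^2 * inner (sff u v) v + y^3 * inner (sff v v) v"
proof -
  have b: "bilinear sff" using lag_bil[OF lag] .
  have c1: "inner (sff u v) u = inner (sff u u) v" using lag_cub[OF lag] by metis
  have c2: "inner (sff v u) u = inner (sff u u) v" using lag_cub[OF lag] lag_sym[OF lag] by metis
  have c3: "inner (sff v v) u = inner (sff u v) v" using lag_cub[OF lag] lag_sym[OF lag] by metis
  have c4: "inner (sff v u) v = inner (sff u v) v" using lag_sym[OF lag] by metis
  show ?thesis
    by (simp add: bilinear_ladd[OF b] bilinear_radd[OF b] bilinear_lmul[OF b] bilinear_rmul[OF b]
        inner_add_left inner_add_right c1 c2 c3 c4 power2_eq_square power3_eq_cube algebra_simps)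
qed

lemma poly_conds:
  fixes \<gamma> \<beta> \<delta> \<epsilon> :: real
  assumes PM: "\<And>x y. x^2 + y^2 = 1 \<Longrightarrow> x^3*\<gamma> + 3*x^2*y*\<beta> + 3*x*y^2*\<delta> + y^3*\<epsilon> \<le> \<gamma>"
  shows "\<beta> = 0" "\<gamma> \<ge> 0" "\<gamma> \<ge> 2*\<delta>" "\<gamma> = 0 \<Longrightarrow> \<delta> = 0 \<and> \<epsilon> = 0"
proof -
  define p where "p s = \<gamma>*(1+s^2)^3 - ((1-s^2)^3*\<gamma> + 3*(1-s^2)^2*(2* s)*\<beta> + 3*(1-s^2)*(2* s)^2*\<delta> + (2* s)^3*\<epsilon>)" for s :: real
  have pnn: "p s \<ge> 0" for s
  proof -
    define N where "N = 1 + s^2"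
    have N: "N > 0" unfolding N_def by (simp add: add_pos_nonneg)
    have e: "(1-s^2)^2 + (2* s)^2 = N^2" unfolding N_def by (simp add: power2_eq_square algebra_simps)
    have "((1-s^2)/N)^2 + (2* s/N)^2 = ((1-s^2)^2 + (2* s)^2)/N^2" by (simp add: power_divide add_divide_distrib)
    hence u: "((1-s^2)/N)^2 + (2* s/N)^2 = 1" using e N by simp
    have "((1-s^2)/N)^3*\<gamma> + 3*((1-s^2)/N)^2*(2* s/N)*\<beta> + 3*((1-s^2)/N)*(2* s/N)^2*\<delta> + (2* s/N)^3*\<epsilon> \<le> \<gamma>"
      by (rule PM[OF u])
    moreover have "((1-s^2)/N)^3*\<gamma> + 3*((1-s^2)/N)^2*(2* s/N)*\<beta> + 3*((1-s^2)/N)*(2* s/N)^2*\<delta> + (2* s/N)^3*\<epsilon>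
       = ((1-s^2)^3*\<gamma> + 3*(1-s^2)^2*(2* s)*\<beta> + 3*(1-s^2)*(2* s)^2*\<delta> + (2* s)^3*\<epsilon>) / N^3"
      using N by (simp add: power_divide add_divide_distrib power2_eq_square power3_eq_cube)
    ultimately have "((1-s^2)^3*\<gamma> + 3*(1-s^2)^2*(2* s)*\<beta> + 3*(1-s^2)*(2* s)^2*\<delta> + (2* s)^3*\<epsilon>) / N^3 \<le> \<gamma>"
      by simp
    hence "((1-s^2)^3*\<gamma> + 3*(1-s^2)^2*(2* s)*\<beta> + 3*(1-s^2)*(2* s)^2*\<delta> + (2* s)^3*\<epsilon>) \<le> \<gamma> * N^3"
      using N by (simp add: divide_le_eq)
    thus ?thesis unfolding p_def N_def by (simp add: algebra_simps)
  qed
  define q1 where "q1 s = -6*\<beta> + (6*\<gamma>-12*\<delta>)* s + (12*\<beta>-8*\<epsilon>)* s^2 + 12*\<delta>* s^3 - 6*\<beta>* s^4 + 2*\<gamma>* s^5" for s :: real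
  have pq: "p s = s * q1 s" for s unfolding p_def q1_def by (simp add: eval_nat_numeral algebra_simps)
  have a1: "-6*\<beta> \<ge> 0"
  proof (rule lim_nonneg[of _ "6*\<gamma>-12*\<delta>" "12*\<beta>-8*\<epsilon>" "12*\<delta>" "-6*\<beta>" "2*\<gamma>"])
    fix s :: real assume s: "s > 0"
    have "s * q1 s \<ge> 0" using pnn pq by metis
    hence "q1 s \<ge> 0" using s by (simp add: zero_le_mult_iff)
    thus "-6*\<beta> + (6*\<gamma>-12*\<delta>)* s + (12*\<beta>-8*\<epsilon>)* s^2 + 12*\<delta>* s^3 + (-6*\<beta>)* s^4 + 2*\<gamma>* s^5 \<ge> 0"
      unfolding q1_def by simp
  qed
  have a2: "6*\<beta> \<ge> 0"
  proof (rule lim_nonneg[of _ "6*\<gamma>-12*\<delta>" "-(12*\<beta>-8*\<epsilon>)" "12*\<delta>" "6*\<beta>" "2*\<gamma>"])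
    fix s :: real assume s: "s > 0"
    have "(-s) * q1 (-s) \<ge> 0" using pnn pq by metis
    hence "q1 (-s) \<le> 0" using s by (simp add: mult_le_0_iff)
    moreover have "6*\<beta> + (6*\<gamma>-12*\<delta>)* s + (-(12*\<beta>-8*\<epsilon>))* s^2 + 12*\<delta>* s^3 + (6*\<beta>)* s^4 + 2*\<gamma>* s^5 = - q1 (-s)"
      unfolding q1_def by (simp add: eval_nat_numeral algebra_simps)
    ultimately show "6*\<beta> + (6*\<gamma>-12*\<delta>)* s + (-(12*\<beta>-8*\<epsilon>))* s^2 + 12*\<delta>* s^3 + (6*\<beta>)* s^4 + 2*\<gamma>* s^5 \<ge> 0"
      by linarith
  qed
  show b0: "\<beta> = 0" using a1 a2 by simp
  have "6*\<gamma>-12*\<delta> \<ge> 0"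
  proof (rule lim_nonneg[of _ "-8*\<epsilon>" "12*\<delta>" "0" "2*\<gamma>" "0"])
    fix s :: real assume s: "s > 0"
    have "p s = s^2 * ((6*\<gamma>-12*\<delta>) + (-8*\<epsilon>)* s + 12*\<delta>* s^2 + 0* s^3 + 2*\<gamma>* s^4 + 0* s^5)"
      unfolding p_def using b0 by (simp add: eval_nat_numeral algebra_simps)
    hence "s^2 * ((6*\<gamma>-12*\<delta>) + (-8*\<epsilon>)* s + 12*\<delta>* s^2 + 0* s^3 + 2*\<gamma>* s^4 + 0* s^5) \<ge> 0" using pnn by metis
    thus "(6*\<gamma>-12*\<delta>) + (-8*\<epsilon>)* s + 12*\<delta>* s^2 + 0* s^3 + 2*\<gamma>* s^4 + 0* s^5 \<ge> 0"
      using s by (simp add: zero_le_mult_iff)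
  qed
  thus "\<gamma> \<ge> 2*\<delta>" by simp
  have "(-1)^3*\<gamma> + 3*(-1)^2*0*\<beta> + 3*(-1)*0^2*\<delta> + 0^3*\<epsilon> \<le> \<gamma>" by (rule PM) simp
  thus "\<gamma> \<ge> 0" by simp
  assume g0: "\<gamma> = 0"
  have "0^3*\<gamma> + 3*0^2*(-1)*\<beta> + 3*0*(-1)^2*\<delta> + (-1)^3*\<epsilon> \<le> \<gamma>" by (rule PM) simp
  moreover have "0^3*\<gamma> + 3*0^2*1*\<beta> + 3*0*1^2*\<delta> + 1^3*\<epsilon> \<le> \<gamma>" by (rule PM) simp
  ultimately have e0: "\<epsilon> = 0" using g0 by simp
  have "(3/5)^3*\<gamma> + 3*(3/5)^2*(-4/5)*\<beta> + 3*(3/5)*(-4/5)^2*\<delta> + (-4/5)^3*\<epsilon> \<le> \<gamma>"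
    by (rule PM) (simp add: power2_eq_square)
  moreover have "(-3/5)^3*\<gamma> + 3*(-3/5)^2*(4/5)*\<beta> + 3*(-3/5)*(4/5)^2*\<delta> + (4/5)^3*\<epsilon> \<le> \<gamma>"
    by (rule PM) (simp add: power2_eq_square)
  ultimately have "\<delta> = 0" using g0 e0 b0 by (simp add: power2_eq_square power3_eq_cube)
  thus "\<delta> = 0 \<and> \<epsilon> = 0" using e0 by simp
qed



lemma sphere2: "((x::real), (y::real)) \<in> sphere 0 1 \<longleftrightarrow> x^2 + y^2 = 1"
  by (simp add: dist_norm norm_Pair)

lemma rotate_frame:
  fixes f :: "nat \<Rightarrow> real^'n" and sff :: "real^'n \<Rightarrow> real^'n \<Rightarrow> real^'n"
  assumes lag: "lagrangian_sff sff" and o: "onf f (2+m)"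
  obtains e where "onf e (2+m)" "span (e ` {..<2}) = span (f ` {..<2})" "\<And>j. e (j+2) = f (j+2)"
    "inner (sff (e 0) (e 0)) (e 1) = 0" "inner (sff (e 0) (e 0)) (e 0) \<ge> 0"
    "inner (sff (e 0) (e 0)) (e 0) \<ge> 2 * inner (sff (e 0) (e 1)) (e 1)"
    "inner (sff (e 0) (e 0)) (e 0) = 0 \<Longrightarrow> inner (sff (e 0) (e 1)) (e 1) = 0 \<and> inner (sff (e 1) (e 1)) (e 1) = 0"
proof -
  define C where "C v = inner (sff v v) v" for v
  define \<phi> where "\<phi> p = C (fst p *\<^sub>R f 0 + snd p *\<^sub>R f 1)" for p :: "real \<times> real"
  have cont: "continuous_on (sphere 0 1) \<phi>"
    unfolding \<phi>_def C_def
    by (intro continuous_intros cont_sff[OF lag])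
  have ne: "(1, 0) \<in> sphere (0::real\<times>real) 1" by (simp add: sphere2)
  obtain p0 where p0: "p0 \<in> sphere (0::real\<times>real) 1" "\<And>q. q \<in> sphere 0 1 \<Longrightarrow> \<phi> q \<le> \<phi> p0"
    using continuous_attains_sup[OF compact_sphere _ cont] ne by blast
  obtain x0 y0 where xy: "p0 = (x0, y0)" by (cases p0)
  have u0: "x0^2 + y0^2 = 1" using p0(1) xy sphere2 by simp
  define e where "e k = (if k = 0 then x0 *\<^sub>R f 0 + y0 *\<^sub>R f 1 else if k = 1 then (-y0) *\<^sub>R f 0 + x0 *\<^sub>R f 1 else f k)" for k
  have of: "inner (f i) (f j) = (if i = j then 1 else 0)" if "i < 2+m" "j < 2+m" for i j
    using o that unfolding onf_def by blast
  have f00: "inner (f 0) (f 0) = 1" and f11: "inner (f 1) (f 1) = 1" and f01: "inner (f 0) (f 1) = 0"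
    and f10: "inner (f 1) (f 0) = 0" using of by auto
  have f0k: "inner (f 0) (f k) = 0" "inner (f k) (f 0) = 0" "inner (f 1) (f k) = 0" "inner (f k) (f 1) = 0"
    if "k < 2+m" "k \<noteq> 0" "k \<noteq> 1" for k using of that by auto
  have oe: "onf e (2+m)"
    unfolding onf_def
  proof (intro allI impI)
    fix i j assume ij: "i < 2+m" "j < 2+m"
    show "inner (e i) (e j) = (if i = j then 1 else 0)"
      using ij u0 f00 f11 f01 f10 f0k[of i] f0k[of j] of[of i j]
      by (auto simp: e_def inner_add_left inner_add_right power2_eq_square algebra_simps)
  qed
  have e0: "e 0 = x0 *\<^sub>R f 0 + y0 *\<^sub>R f 1" and e1: "e 1 = (-y0) *\<^sub>R f 0 + x0 *\<^sub>R f 1"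
    by (simp_all add: e_def)
  have l2: "{..<2::nat} = {0, 1}" by auto
  have sp: "span (e ` {..<2}) = span (f ` {..<2})"
  proof (unfold span_eq, intro conjI)
    have "e 0 \<in> span (f ` {0,1})" "e 1 \<in> span (f ` {0,1})"
      unfolding e0 e1 by (intro span_add span_scale span_base; simp)+
    thus "e ` {..<2} \<subseteq> span (f ` {..<2})" unfolding l2 by auto
    have f0: "f 0 = x0 *\<^sub>R e 0 + (-y0) *\<^sub>R e 1"
      unfolding e0 e1 using u0 by (simp add: algebra_simps scaleR_add_right power2_eq_square scaleR_add_left[symmetric])
    have f1: "f 1 = y0 *\<^sub>R e 0 + x0 *\<^sub>R e 1"
      unfolding e0 e1 using u0 by (simp add: algebra_simps scaleR_add_right power2_eq_square scaleR_add_left[symmetric])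
    have "f 0 \<in> span (e ` {0,1})" "f 1 \<in> span (e ` {0,1})"
      by (subst f0, intro span_add span_scale span_base; simp) (subst f1, intro span_add span_scale span_base; simp)
    thus "f ` {..<2} \<subseteq> span (e ` {..<2})" unfolding l2 by auto
  qed
  define \<gamma> where "\<gamma> = inner (sff (e 0) (e 0)) (e 0)"
  define \<beta> where "\<beta> = inner (sff (e 0) (e 0)) (e 1)"
  define \<delta> where "\<delta> = inner (sff (e 0) (e 1)) (e 1)"
  define \<epsilon> where "\<epsilon> = inner (sff (e 1) (e 1)) (e 1)"
  have PM: "x^3*\<gamma> + 3*x^2*y*\<beta> + 3*x*y^2*\<delta> + y^3*\<epsilon> \<le> \<gamma>" if xy1: "x^2 + y^2 = 1" for x y
  proof -
    have vec: "x *\<^sub>R e 0 + y *\<^sub>R e 1 = (x*x0 - y*y0) *\<^sub>R f 0 + (x*y0 + y*x0) *\<^sub>R f 1"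
      unfolding e0 e1 by (simp add: algebra_simps scaleR_add_right)
    have "(x*x0 - y*y0)^2 + (x*y0 + y*x0)^2 = (x^2+y^2)*(x0^2+y0^2)"
      by (simp add: power2_eq_square algebra_simps)
    hence "(x*x0 - y*y0)^2 + (x*y0 + y*x0)^2 = 1" using xy1 u0 by simp
    hence "(x*x0 - y*y0, x*y0 + y*x0) \<in> sphere 0 1" by (rule sphere2[THEN iffD2])
    hence "\<phi> (x*x0 - y*y0, x*y0 + y*x0) \<le> \<phi> p0" by (rule p0(2))
    hence "C (x *\<^sub>R e 0 + y *\<^sub>R e 1) \<le> C (e 0)" unfolding \<phi>_def xy vec by (simp add: e0)
    thus ?thesis unfolding C_def cube_exp[OF lag] \<gamma>_def \<beta>_def \<delta>_def \<epsilon>_def by (simp add: algebra_simps)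
  qed
  note pc = poly_conds[OF PM]
  show ?thesis
  proof (rule that[OF oe sp])
    show "e (j+2) = f (j+2)" for j by (simp add: e_def)
  qed (use pc in \<open>simp_all add: \<gamma>_def \<beta>_def \<delta>_def \<epsilon>_def\<close>)
qed



lemma sum_shift3: fixes m :: nat and G :: "nat \<Rightarrow> 'a::comm_monoid_add" shows "(\<Sum>k=3..2+m. G k) = (\<Sum>k<m. G (k+3))"
proof (induction m)
  case 0 then show ?case by simp
next
  case (Suc m)
  have "{3..2 + Suc m} = insert (m+3) {3..2+m}" by auto
  moreover have "m+3 \<notin> {3..2+m}" by simp
  ultimately show ?case using Suc by (simp add: add.commute)
qed

lemma vec_expand:
  fixes e :: "nat \<Rightarrow> real^'n"
  assumes n: "CARD('n) = 2 + m" and o: "onf e (2+m)"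
  shows "v = inner v (e 0) *\<^sub>R e 0 + inner v (e 1) *\<^sub>R e 1 + (\<Sum>k<m. inner v (e (k+2)) *\<^sub>R e (k+2))"
proof -
  have "v = (\<Sum>r<2+m. inner v (e r) *\<^sub>R e r)"
    using expand_span[OF o, of v] onf_full[of e] o n by simp
  also have "\<dots> = inner v (e 0) *\<^sub>R e 0 + inner v (e 1) *\<^sub>R e 1 + (\<Sum>k<m. inner v (e (k+2)) *\<^sub>R e (k+2))"
    unfolding sum_split_add sum2 by simp
  finally show ?thesis .
qed

lemma sum_delta_scale:
  fixes v :: "nat \<Rightarrow> 'a::real_vector"
  assumes "j < m"
  shows "(\<Sum>k<m. (if j = k then c else 0) *\<^sub>R v k) = c *\<^sub>R v j"
proof -
  have "(\<Sum>k<m. (if j = k then c else 0) *\<^sub>R v k) = (\<Sum>k<m. if j = k then c *\<^sub>R v k else 0)"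
    by (intro sum.cong) auto
  also have "\<dots> = c *\<^sub>R v j" using assms by (simp add: sum.delta)
  finally show ?thesis .
qed



theorem lemma3p1:
  fixes sff :: "real^'n \<Rightarrow> real^'n \<Rightarrow> real^'n" and c :: real
  assumes n5: "CARD('n) \<ge> 5"
    and lag: "lagrangian_sff sff"
    and eq: "delta_2_nm2 c sff =
       (real CARD('n))^2 * (real CARD('n) - 2) / (4 * (real CARD('n) - 1))
         * inner (mean_curv sff) (mean_curv sff) + 2 * (real CARD('n) - 2) * c"
  shows "\<exists>(e :: nat \<Rightarrow> real^'n) (gam::real) (lam::real) (mu::real) (hk :: nat \<Rightarrow> nat \<Rightarrow> nat \<Rightarrow> real).
    (\<forall>i\<in>{1..CARD('n)}. \<forall>j\<in>{1..CARD('n)}. inner (e i) (e j) = (if i = j then 1 else 0))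
    \<and> sff (e 1) (e 1) = gam *\<^sub>R e 1
    \<and> sff (e 1) (e 2) = (real CARD('n) * lam - gam) *\<^sub>R e 2
    \<and> sff (e 2) (e 2) = (real CARD('n) * lam - gam) *\<^sub>R e 1 + (real CARD('n) * mu) *\<^sub>R e 2
    \<and> (\<forall>i\<in>{3..CARD('n)}. sff (e 1) (e i) = lam *\<^sub>R e i \<and> sff (e 2) (e i) = mu *\<^sub>R e i)
    \<and> (\<forall>i\<in>{3..CARD('n)}. \<forall>j\<in>{3..CARD('n)}.
          sff (e i) (e j) = (if i = j then 1 else 0) *\<^sub>R (lam *\<^sub>R e 1 + mu *\<^sub>R e 2)
                            + (\<Sum>k=3..CARD('n). hk i j k *\<^sub>R e k))
    \<and> (\<forall>i\<in>{3..CARD('n)}. \<forall>j\<in>{3..CARD('n)}. \<forall>k\<in>{3..CARD('n)}.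
          hk i j k = hk j i k \<and> hk i j k = hk i k j)
    \<and> (\<forall>k\<in>{3..CARD('n)}. (\<Sum>i=3..CARD('n). hk i i k) = 0)
    \<and> gam \<ge> 0 \<and> gam \<ge> 2 * real CARD('n) / 3 * lam
    \<and> (gam = 0 \<longrightarrow> lam = 0 \<and> mu = 0)
    \<and> (gam > 0 \<longrightarrow> gam > real CARD('n) / 2 * lam)"
proof -
  define m where "m = CARD('n) - 2"
  have n2: "CARD('n) = 2 + m" using n5 unfolding m_def by simp
  have m3: "m \<ge> 3" using n5 unfolding m_def by simp
  have mpos: "real m > 0" using m3 by simp
  obtain f where of: "onf f (2+m)" and fmax: "\<And>g. onf g (2+m) \<Longrightarrow> mixf c sff g m \<le> mixf c sff f m"
    using exists_max_frame[OF lag n2] by metis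
  define S where "S = {tau_sub c sff L1 + tau_sub c sff L2 | L1 L2.
              subspace L1 \<and> subspace L2 \<and> dim L1 = 2 \<and> dim L2 = CARD('n) - 2
              \<and> (\<forall>x\<in>L1. \<forall>y\<in>L2. inner x y = 0)}"
  define U where "U = tau_sub c sff (UNIV :: (real^'n) set)"
  have dS: "delta_2_nm2 c sff = U - Inf S" unfolding delta_2_nm2_def S_def U_def by simp
  have memS: "U - mixf c sff f m \<in> S"
  proof -
    have "U - mixf c sff f m = tau_sub c sff (span (f ` {..<2})) + tau_sub c sff (span ((\<lambda>j. f (j+2)) ` {..<m}))"
      using frame_mix[OF lag n2 of, of c] unfolding U_def by simp
    thus ?thesis unfolding S_def using frame_in_S[OF n2 of] by blast
  qed
  have lowS: "U - mixf c sff f m \<le> y" if "y \<in> S" for y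
  proof -
    obtain L1 L2 where y: "y = tau_sub c sff L1 + tau_sub c sff L2" and L: "subspace L1" "subspace L2"
      "dim L1 = 2" "dim L2 = CARD('n) - 2" "\<forall>x\<in>L1. \<forall>y\<in>L2. inner x y = 0"
      using \<open>y \<in> S\<close> unfolding S_def by blast
    obtain g where g: "onf g (2+m)" "L1 = span (g ` {..<2})" "L2 = span ((\<lambda>j. g (j+2)) ` {..<m})"
      using S_frame[OF n2 L] by metis
    have "U - y = mixf c sff g m" using frame_mix[OF lag n2 g(1), of c] g y unfolding U_def by simp
    thus ?thesis using fmax[OF g(1)] by simp
  qed
  have "Inf S = U - mixf c sff f m" by (rule cInf_eq_minimum[OF memS lowS])
  hence dmix: "delta_2_nm2 c sff = mixf c sff f m" using dS by simp
  obtain e where oe: "onf e (2+m)" and spe: "span (e ` {..<2}) = span (f ` {..<2})" and ej: "\<And>j. e (j+2) = f (j+2)"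
    and R1: "inner (sff (e 0) (e 0)) (e 1) = 0" and R2: "inner (sff (e 0) (e 0)) (e 0) \<ge> 0"
    and R3: "inner (sff (e 0) (e 0)) (e 0) \<ge> 2 * inner (sff (e 0) (e 1)) (e 1)"
    and R4: "inner (sff (e 0) (e 0)) (e 0) = 0 \<Longrightarrow> inner (sff (e 0) (e 1)) (e 1) = 0 \<and> inner (sff (e 1) (e 1)) (e 1) = 0"
    using rotate_frame[OF lag of] by metis
  have hfun: "(\<lambda>j. e (j+2)) = (\<lambda>j. f (j+2))" using ej by auto
  have "mixf c sff e m = mixf c sff f m"
    using frame_mix[OF lag n2 oe, of c, unfolded spe hfun] frame_mix[OF lag n2 of, of c] by argo
  hence "mixf c sff e m = (real CARD('n))^2 * (real CARD('n) - 2) / (4 * (real CARD('n) - 1))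
         * inner (mean_curv sff) (mean_curv sff) + 2 * (real CARD('n) - 2) * c"
    using dmix eq by simp
  hence D0: "real m/(4*(real m+1)) * (\<Sum>r<2+m. (\<Sum>i<2+m. inner (sff (e i) (e i)) (e r))^2)
      - (\<Sum>a<2. \<Sum>j<m. \<Sum>r<2+m. inner (sff (e a) (e a)) (e r) * inner (sff (e (j+2)) (e (j+2))) (e r)
            - (inner (sff (e a) (e (j+2))) (e r))^2) = 0"
    using frame_D[OF lag n2 oe, of c] by simp
  define T where "T a b r = inner (sff (e a) (e b)) (e r)" for a b r
  have s1: "T a b r = T b a r" for a b r unfolding T_def by (simp add: lag_sym[OF lag])
  have s2: "T a b r = T a r b" for a b r unfolding T_def by (simp add: lag_cub[OF lag])
  have E: "(\<forall>k<m. T 0 0 (k+2) = 0 \<and> T 1 1 (k+2) = 0 \<and> T 0 1 (k+2) = 0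
              \<and> (\<Sum>l<m. T (l+2) (l+2) (k+2)) = 0)
         \<and> (\<forall>a<2. \<forall>j<m. \<forall>k<m. T a (j+2) (k+2) = (if j = k then (\<Sum>l<m. T (l+2) (l+2) a)/m else 0))
         \<and> (\<forall>b<2. T 0 0 b + T 1 1 b = (real m + 2)/m * (\<Sum>l<m. T (l+2) (l+2) b))"
    by (rule core(2)[OF m3 s1 s2]) (use D0 in \<open>simp add: T_def\<close>)
  have E1: "T 0 0 (k+2) = 0" "T 1 1 (k+2) = 0" "T 0 1 (k+2) = 0" "(\<Sum>l<m. T (l+2) (l+2) (k+2)) = 0"
    if "k < m" for k using E that by auto
  define gam where "gam = T 0 0 0"
  define lam where "lam = (\<Sum>l<m. T (l+2) (l+2) 0) / m"
  define mu where "mu = (\<Sum>l<m. T (l+2) (l+2) 1) / m"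
  define del where "del = T 0 1 1"
  define eps where "eps = T 1 1 1"
  have E2: "T a (j+2) (k+2) = (if j = k then (if a = 0 then lam else mu) else 0)" if "a < 2" "j < m" "k < m" for a j k
    using E that unfolding lam_def mu_def by (auto simp: less_Suc_eq numeral_2_eq_2)
  have E3a: "T 0 0 0 + T 1 1 0 = (real m + 2) * lam" using E mpos unfolding lam_def by auto
  have E3b: "T 0 0 1 + T 1 1 1 = (real m + 2) * mu" using E mpos unfolding mu_def by auto
  have beta0: "T 0 0 1 = 0" using R1 unfolding T_def .
  have T110: "T 1 1 0 = del" unfolding del_def using s1 s2 by metis
  have T010: "T 0 1 0 = 0" using beta0 s2 by metis
  have nlam: "real CARD('n) * lam = gam + del" using E3a T110 n2 unfolding gam_def by (simp add: algebra_simps)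
  have nmu: "real CARD('n) * mu = eps" using E3b beta0 n2 unfolding eps_def by (simp add: algebra_simps)
  have gnn: "gam \<ge> 0" using R2 unfolding gam_def T_def .
  have g2d: "gam \<ge> 2 * del" using R3 unfolding gam_def del_def T_def .
  have g0: "gam = 0 \<Longrightarrow> del = 0 \<and> eps = 0" using R4 unfolding gam_def del_def eps_def T_def .
  have exp: "sff (e a) (e b) = T a b 0 *\<^sub>R e 0 + T a b 1 *\<^sub>R e 1 + (\<Sum>k<m. T a b (k+2) *\<^sub>R e (k+2))" for a b
    unfolding T_def by (rule vec_expand[OF n2 oe])
  define e' where "e' i = e (i - 1)" for i
  define hk where "hk i j k = T (i - 1) (j - 1) (k - 1)" for i j k
  have ncard: "real CARD('n) > 0" by simp
  show ?thesis
  proof (rule exI[of _ e'], rule exI[of _ gam], rule exI[of _ lam], rule exI[of _ mu], rule exI[of _ hk],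
         intro conjI ballI impI)
    fix i j assume ij: "i \<in> {1..CARD('n)}" "j \<in> {1..CARD('n)}"
    hence "i - 1 < 2+m" "j - 1 < 2+m" "(i - 1 = j - 1) = (i = j)" using n2 by auto
    thus "inner (e' i) (e' j) = (if i = j then 1 else 0)" using oe unfolding onf_def e'_def by metis
  next
    show "sff (e' 1) (e' 1) = gam *\<^sub>R e' 1"
      unfolding e'_def gam_def using exp[of 0 0] E1 beta0 by simp
  next
    show "sff (e' 1) (e' 2) = (real CARD('n) * lam - gam) *\<^sub>R e' 2"
      unfolding e'_def using exp[of 0 1] E1 T010 nlam unfolding del_def by simp
  next
    have "T 1 1 1 = real CARD('n) * mu" using nmu unfolding eps_def by simp
    thus "sff (e' 2) (e' 2) = (real CARD('n) * lam - gam) *\<^sub>R e' 1 + (real CARD('n) * mu) *\<^sub>R e' 2"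
      unfolding e'_def using exp[of 1 1] E1 T110 nlam by simp
  next
    fix i assume i: "i \<in> {3..CARD('n)}"
    define j where "j = i - 3"
    have j: "j < m" "i - 1 = j + 2" using i n2 unfolding j_def by auto
    have a: "T 0 (j+2) 0 = 0" "T 0 (j+2) 1 = 0" "T 1 (j+2) 0 = 0" "T 1 (j+2) 1 = 0"
      using E1[OF j(1)] s1 s2 by metis+
    have "sff (e 0) (e (j+2)) = lam *\<^sub>R e (j+2)"
      using exp[of 0 "j+2"] a E2[of 0 j] j(1) sum_delta_scale[OF j(1), of lam "\<lambda>k. e (k+2)"] by simp
    thus "sff (e' 1) (e' i) = lam *\<^sub>R e' i" unfolding e'_def j(2) by simp
    have "sff (e 1) (e (j+2)) = mu *\<^sub>R e (j+2)"
      using exp[of 1 "j+2"] a E2[of 1 j] j(1) sum_delta_scale[OF j(1), of mu "\<lambda>k. e (k+2)"] by simp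
    thus "sff (e' 2) (e' i) = mu *\<^sub>R e' i" unfolding e'_def j(2) by simp
  next
    fix i j assume i: "i \<in> {3..CARD('n)}" and j: "j \<in> {3..CARD('n)}"
    define p where "p = i - 3"
    define q where "q = j - 3"
    have pq: "p < m" "q < m" "i - 1 = p + 2" "j - 1 = q + 2" "(p = q) = (i = j)"
      using i j n2 unfolding p_def q_def by auto
    have t0: "T (p+2) (q+2) 0 = (if p = q then lam else 0)" using E2[of 0 p q] pq s1 s2 by (metis less_numeral_extra(1) pos2)
    have t1: "T (p+2) (q+2) 1 = (if p = q then mu else 0)"
    proof -
      have "T (p+2) (q+2) 1 = T 1 (p+2) (q+2)" using s1 s2 by metis
      thus ?thesis using E2[of 1 p q] pq by simp
    qed
    have sh: "(\<Sum>k=3..CARD('n). hk i j k *\<^sub>R e' k) = (\<Sum>k<m. T (p+2) (q+2) (k+2) *\<^sub>R e (k+2))"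
      unfolding n2 sum_shift3 hk_def e'_def pq(3) pq(4) by simp
    show "sff (e' i) (e' j) = (if i = j then 1 else 0) *\<^sub>R (lam *\<^sub>R e' 1 + mu *\<^sub>R e' 2)
                            + (\<Sum>k=3..CARD('n). hk i j k *\<^sub>R e' k)"
      unfolding sh using exp[of "p+2" "q+2"] t0 t1 pq(5) unfolding e'_def pq(3) pq(4) by auto
  next
    fix i j k assume "i \<in> {3..CARD('n)}" "j \<in> {3..CARD('n)}" "k \<in> {3..CARD('n)}"
    show "hk i j k = hk j i k" unfolding hk_def using s1 by metis
    show "hk i j k = hk i k j" unfolding hk_def using s2 by metis
  next
    fix k assume k: "k \<in> {3..CARD('n)}"
    define q where "q = k - 3"
    have q: "q < m" "k - 1 = q + 2" using k n2 unfolding q_def by auto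
    show "(\<Sum>i=3..CARD('n). hk i i k) = 0"
      unfolding n2 sum_shift3 hk_def q(2) using E1(4)[OF q(1)] by simp
  next
    show "gam \<ge> 0" by (rule gnn)
  next
    show "gam \<ge> 2 * real CARD('n) / 3 * lam" using nlam g2d by (simp add: field_simps)
  next
    assume "gam = 0"
    thus "lam = 0" "mu = 0" using g0 nlam nmu ncard by auto
  next
    assume "gam > 0"
    thus "gam > real CARD('n) / 2 * lam" using nlam g2d by (simp add: field_simps)
  qed
qed


end
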